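(* Let $\mathcal{F}$ be a saturated fusion system over a finite $p$-group $S$, and let $\mathcal{F}_0$ be a weakly normal subsystem of $\mathcal{F}$ over $S_0\le S$. Assume that $O^p(\Aut_{\mathcal{F}}(S_0))\le\Aut_{\mathcal{F}_0}(S_0)$. Then $O^p(\Aut_{\mathcal{F}}(P))\le\Aut_{\mathcal{F}_0}(P)$ for every $P\le S_0$. Thus, if in addition $\mathfrak{hyp}(\mathcal{F})\le S_0$, then $\mathcal{F}_0$ has $p$-power index in $\mathcal{F}$.
   Context: A subsystem $\mathcal{F}_0$ over $S_0$ is weakly normal in $\mathcal{F}$ (in the sense of Aschbacher) if $S_0$ is strongly closed in $\mathcal{F}$, $\mathcal{F}_0$ is saturated, $\mathcal{F}_0$ is $\mathcal{F}$-invariant (for $P\le Q\le S_0$ and $\phi\in\Hom_{\mathcal{F}}(Q,S_0)$, $\phi\Hom_{\mathcal{F}_0}(P,Q)\phi^{-1}\subseteq\Hom_{\mathcal{F}_0}(\phi P,\phi Q)$), and the Frattini condition holds (every $\phi\in\Hom_{\mathcal{F}}(P,S_0)$ with $P\le S_0$ factors as $\alpha\circ\phi_0$ with $\phi_0\in\Hom_{\mathcal{F}_0}(P,S_0)$, $\alpha\in\Aut_{\mathcal{F}}(S_0)$). The hyperfocal subgroup is $\mathfrak{hyp}(\mathcal{F})=\langle \phi(s)s^{-1}\mid s\in P\le S,\ \phi\in O^p(\Aut_{\mathcal{F}}(P))\rangle$. A subsystem $\mathcal{F}_0$ over $S_0\le S$ has $p$-power index in $\mathcal{F}$ if $\mathfrak{hyp}(\mathcal{F})\le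 S_0$ and $O^p(\Aut_{\mathcal{F}}(P))\le\Aut_{\mathcal{F}_0}(P)$ for each $P\le S_0$. *)

theory Defs
  imports "HOL-Algebra.Algebra"
begin

text \<open>
A fusion system over S is given as a function
F :: 'a set => 'a set => ('a => 'a) set, where F P Q is the set Hom_F(P,Q)
of morphisms from P to Q; morphisms are represented as extensional maps
(value undefined outside the domain P), i.e. elements of P ->E Q.
\<close>

definition p_group :: "nat \<Rightarrow> ('a, 'b) monoid_scheme \<Rightarrow> bool" where
  "p_group p S \<longleftrightarrow> Factorial_Ring.prime p \<and> group S \<and> finite (carrier S) \<and>
     (\<exists>n. card (carrier S) = p ^ n)"

definition Inj_hom :: "('a, 'b) monoid_scheme \<Rightarrow> 'a set \<Rightarrow> 'a set \<Rightarrow> ('a \<Rightarrow> 'a) set" where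
  "Inj_hom S P Q = {\<phi>. \<phi> \<in> P \<rightarrow>\<^sub>E Q \<and> inj_on \<phi> P \<and>
      (\<forall>x\<in>P. \<forall>y\<in>P. \<phi> (x \<otimes>\<^bsub>S\<^esub> y) = \<phi> x \<otimes>\<^bsub>S\<^esub> \<phi> y)}"

definition conjmap :: "('a, 'b) monoid_scheme \<Rightarrow> 'a \<Rightarrow> 'a set \<Rightarrow> ('a \<Rightarrow> 'a)" where
  "conjmap S g P = (\<lambda>x\<in>P. g \<otimes>\<^bsub>S\<^esub> x \<otimes>\<^bsub>S\<^esub> inv\<^bsub>S\<^esub> g)"

definition Hom_S :: "('a, 'b) monoid_scheme \<Rightarrow> 'a set \<Rightarrow> 'a set \<Rightarrow> ('a \<Rightarrow> 'a) set" where
  "Hom_S S P Q = {conjmap S g P | g. g \<in> carrier S \<and> conjmap S g P ` P \<subseteq> Q}"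

definition Aut_S :: "('a, 'b) monoid_scheme \<Rightarrow> 'a set \<Rightarrow> ('a \<Rightarrow> 'a) set" where
  "Aut_S S P = {conjmap S g P | g. g \<in> normalizer S P}"

definition centralizer :: "('a, 'b) monoid_scheme \<Rightarrow> 'a set \<Rightarrow> 'a set" where
  "centralizer S P = {g \<in> carrier S. \<forall>x\<in>P. g \<otimes>\<^bsub>S\<^esub> x = x \<otimes>\<^bsub>S\<^esub> g}"

text \<open>Fusion system over the finite p-group S (category with objects the
subgroups of S): Hom_S(P,Q) \<subseteq> Hom_F(P,Q) \<subseteq> Inj(P,Q), closure under
composition, and every morphism is the composite of an F-isomorphism onto
its image (whose inverse is in F) and an inclusion.\<close>
definition fusion_system :: "nat \<Rightarrow> ('a, 'b) monoid_scheme \<Rightarrow> ('a set \<Rightarrow> 'a set \<Rightarrow> ('a \<Rightarrow> 'a) set) \<Rightarrow> bool" where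
  "fusion_system p S F \<longleftrightarrow> p_group p S \<and>
     (\<forall>P Q. F P Q \<noteq> {} \<longrightarrow> subgroup P S \<and> subgroup Q S) \<and>
     (\<forall>P Q. subgroup P S \<and> subgroup Q S \<longrightarrow>
        Hom_S S P Q \<subseteq> F P Q \<and> F P Q \<subseteq> Inj_hom S P Q) \<and>
     (\<forall>P Q R \<phi> \<psi>. \<phi> \<in> F P Q \<and> \<psi> \<in> F Q R \<longrightarrow> compose P \<psi> \<phi> \<in> F P R) \<and>
     (\<forall>P Q \<phi>. \<phi> \<in> F P Q \<longrightarrow> \<phi> \<in> F P (\<phi> ` P) \<and>
        (\<lambda>y\<in>\<phi> ` P. inv_into P \<phi> y) \<in> F (\<phi> ` P) P)"

definition Aut_grp :: "('a set \<Rightarrow> 'a set \<Rightarrow> ('a \<Rightarrow> 'a) set) \<Rightarrow> 'a set \<Rightarrow> ('a \<Rightarrow> 'a) monoid" where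
  "Aut_grp F P = \<lparr>carrier = F P P, monoid.mult = (\<lambda>\<phi> \<psi>. compose P \<phi> \<psi>), monoid.one = (\<lambda>x\<in>P. x)\<rparr>"

definition O_p_upper :: "nat \<Rightarrow> ('c, 'd) monoid_scheme \<Rightarrow> 'c set" where
  "O_p_upper p G = \<Inter> {N. N \<lhd> G \<and> (\<exists>n. card (carrier G) = card N * p ^ n)}"

definition sylow_in :: "nat \<Rightarrow> 'c set \<Rightarrow> 'c set \<Rightarrow> bool" where
  "sylow_in p H K \<longleftrightarrow> H \<subseteq> K \<and> (\<exists>n. card H = p ^ n) \<and> \<not> p dvd (card K div card H)"

definition fully_normalized :: "('a, 'b) monoid_scheme \<Rightarrow> ('a set \<Rightarrow> 'a set \<Rightarrow> ('a \<Rightarrow> 'a) set) \<Rightarrow> 'a set \<Rightarrow> bool" where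
  "fully_normalized S F P \<longleftrightarrow> subgroup P S \<and>
     (\<forall>\<phi>\<in>F P (carrier S). card (normalizer S (\<phi> ` P)) \<le> card (normalizer S P))"

definition fully_centralized :: "('a, 'b) monoid_scheme \<Rightarrow> ('a set \<Rightarrow> 'a set \<Rightarrow> ('a \<Rightarrow> 'a) set) \<Rightarrow> 'a set \<Rightarrow> bool" where
  "fully_centralized S F P \<longleftrightarrow> subgroup P S \<and>
     (\<forall>\<phi>\<in>F P (carrier S). card (centralizer S (\<phi> ` P)) \<le> card (centralizer S P))"

text \<open>N_phi = {g in N_S(P) | phi c_g phi^-1 in Aut_S(phi P)}, written out:
phi o c_g = c_h o phi on P for some h in S.\<close>
definition N_phi :: "('a, 'b) monoid_scheme \<Rightarrow> 'a set \<Rightarrow> ('a \<Rightarrow> 'a) \<Rightarrow> 'a set" where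
  "N_phi S P \<phi> = {g \<in> normalizer S P. \<exists>h \<in> normalizer S (\<phi> ` P).
      \<forall>x\<in>P. \<phi> (g \<otimes>\<^bsub>S\<^esub> x \<otimes>\<^bsub>S\<^esub> inv\<^bsub>S\<^esub> g) = h \<otimes>\<^bsub>S\<^esub> \<phi> x \<otimes>\<^bsub>S\<^esub> inv\<^bsub>S\<^esub> h}"

definition saturated_fusion_system :: "nat \<Rightarrow> ('a, 'b) monoid_scheme \<Rightarrow> ('a set \<Rightarrow> 'a set \<Rightarrow> ('a \<Rightarrow> 'a) set) \<Rightarrow> bool" where
  "saturated_fusion_system p S F \<longleftrightarrow> fusion_system p S F \<and>
     (\<forall>P. fully_normalized S F P \<longrightarrow>
        fully_centralized S F P \<and> sylow_in p (Aut_S S P) (F P P)) \<and>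
     (\<forall>P \<phi>. subgroup P S \<and> \<phi> \<in> F P (carrier S) \<and> fully_centralized S F (\<phi> ` P) \<longrightarrow>
        (\<exists>\<psi> \<in> F (N_phi S P \<phi>) (carrier S). \<forall>x\<in>P. \<psi> x = \<phi> x))"

definition strongly_closed :: "('a, 'b) monoid_scheme \<Rightarrow> ('a set \<Rightarrow> 'a set \<Rightarrow> ('a \<Rightarrow> 'a) set) \<Rightarrow> 'a set \<Rightarrow> bool" where
  "strongly_closed S F S0 \<longleftrightarrow> subgroup S0 S \<and>
     (\<forall>P \<phi>. subgroup P S \<and> P \<subseteq> S0 \<and> \<phi> \<in> F P (carrier S) \<longrightarrow> \<phi> ` P \<subseteq> S0)"

definition subsystem :: "('a, 'b) monoid_scheme \<Rightarrow> ('a set \<Rightarrow> 'a set \<Rightarrow> ('a \<Rightarrow> 'a) set) \<Rightarrow> 'a set \<Rightarrow> ('a set \<Rightarrow> 'a set \<Rightarrow> ('a \<Rightarrow> 'a) set) \<Rightarrow> bool" where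
  "subsystem S F S0 F0 \<longleftrightarrow> subgroup S0 S \<and> (\<forall>P Q. F0 P Q \<subseteq> F P Q)"

definition weakly_normal :: "nat \<Rightarrow> ('a, 'b) monoid_scheme \<Rightarrow> ('a set \<Rightarrow> 'a set \<Rightarrow> ('a \<Rightarrow> 'a) set) \<Rightarrow> 'a set \<Rightarrow> ('a set \<Rightarrow> 'a set \<Rightarrow> ('a \<Rightarrow> 'a) set) \<Rightarrow> bool" where
  "weakly_normal p S F S0 F0 \<longleftrightarrow>
     subsystem S F S0 F0 \<and>
     strongly_closed S F S0 \<and>
     saturated_fusion_system p (S\<lparr>carrier := S0\<rparr>) F0 \<and>
     (\<forall>P Q \<phi> \<psi>. subgroup P S \<and> subgroup Q S \<and> P \<subseteq> Q \<and> Q \<subseteq> S0 \<and>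
        \<phi> \<in> F Q S0 \<and> \<psi> \<in> F0 P Q \<longrightarrow>
        (\<lambda>y\<in>\<phi> ` P. \<phi> (\<psi> (inv_into Q \<phi> y))) \<in> F0 (\<phi> ` P) (\<phi> ` Q)) \<and>
     (\<forall>P \<phi>. subgroup P S \<and> P \<subseteq> S0 \<and> \<phi> \<in> F P S0 \<longrightarrow>
        (\<exists>\<phi>0 \<in> F0 P S0. \<exists>\<alpha> \<in> F S0 S0. \<phi> = compose P \<alpha> \<phi>0))"

definition hyp :: "nat \<Rightarrow> ('a, 'b) monoid_scheme \<Rightarrow> ('a set \<Rightarrow> 'a set \<Rightarrow> ('a \<Rightarrow> 'a) set) \<Rightarrow> 'a set" where
  "hyp p S F = generate S {\<phi> s \<otimes>\<^bsub>S\<^esub> inv\<^bsub>S\<^esub> s | P s \<phi>.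
      subgroup P S \<and> s \<in> P \<and> \<phi> \<in> O_p_upper p (Aut_grp F P)}"

definition p_power_index :: "nat \<Rightarrow> ('a, 'b) monoid_scheme \<Rightarrow> ('a set \<Rightarrow> 'a set \<Rightarrow> ('a \<Rightarrow> 'a) set) \<Rightarrow> 'a set \<Rightarrow> ('a set \<Rightarrow> 'a set \<Rightarrow> ('a \<Rightarrow> 'a) set) \<Rightarrow> bool" where
  "p_power_index p S F S0 F0 \<longleftrightarrow> hyp p S F \<subseteq> S0 \<and>
     (\<forall>P. subgroup P S \<and> P \<subseteq> S0 \<longrightarrow> O_p_upper p (Aut_grp F P) \<subseteq> F0 P P)"

end

theory Submission imports Defs begin
definition thY :: "('a set \<Rightarrow> 'a set \<Rightarrow> ('a \<Rightarrow> 'a) set) \<Rightarrow> 'a set \<Rightarrow> ('a \<Rightarrow> 'a) \<Rightarrow> ('a \<Rightarrow> 'a)" where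
  "thY F0 P \<alpha> = (SOME \<theta>. \<theta> \<in> F0 (\<alpha> ` P) P)"

definition fY :: "('a set \<Rightarrow> 'a set \<Rightarrow> ('a \<Rightarrow> 'a) set) \<Rightarrow> 'a set \<Rightarrow> ('a \<Rightarrow> 'a) \<Rightarrow> ('a \<Rightarrow> 'a)" where
  "fY F0 P \<alpha> = compose P (thY F0 P \<alpha>) \<alpha>"

definition Yset :: "('a set \<Rightarrow> 'a set \<Rightarrow> ('a \<Rightarrow> 'a) set) \<Rightarrow> ('a set \<Rightarrow> 'a set \<Rightarrow> ('a \<Rightarrow> 'a) set) \<Rightarrow> 'a set \<Rightarrow> 'a set \<Rightarrow> ('a \<Rightarrow> 'a) set" where
  "Yset F F0 S0 P = {\<alpha> \<in> F S0 S0. F0 (\<alpha> ` P) P \<noteq> {}}"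
lemma hom_img_coset:
  assumes "group_hom G K h" "g \<in> carrier G"
  shows "h ` (kernel G K h #>\<^bsub>G\<^esub> g) = {h g}"
proof -
  interpret group_hom G K h by fact
  have "\<one>\<^bsub>G\<^esub> \<in> kernel G K h" by (simp add: kernel_def)
  then have a: "g \<in> kernel G K h #>\<^bsub>G\<^esub> g"
    using assms(2) unfolding r_coset_def by (metis G.l_one UN_iff singletonI)
  have b: "h x = h g" if "x \<in> kernel G K h #>\<^bsub>G\<^esub> g" for x
  proof -
    from that obtain k where k: "k \<in> kernel G K h" "x = k \<otimes>\<^bsub>G\<^esub> g"
      unfolding r_coset_def by blast
    then show ?thesis using assms(2) by (simp add: kernel_def)
  qed
  show ?thesis using a b by blast
qed
lemma card_hom:
  assumes "group_hom G K h" "finite (carrier G)"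
  shows "card (carrier G) = card (kernel G K h) * card (h ` carrier G)"
proof -
  interpret group_hom G K h by fact
  let ?k = "kernel G K h"
  have inj: "inj_on (\<lambda>C. the_elem (h ` C)) (carrier (FactGroup G ?k))"
    by (rule FactGroup_inj_on)
  have img: "(\<lambda>C. the_elem (h ` C)) ` (carrier (FactGroup G ?k)) = h ` carrier G"
  proof
    show "(\<lambda>C. the_elem (h ` C)) ` carrier (FactGroup G ?k) \<subseteq> h ` carrier G"
      using hom_img_coset[OF assms(1)] by (auto simp: FactGroup_def RCOSETS_def)
    show "h ` carrier G \<subseteq> (\<lambda>C. the_elem (h ` C)) ` carrier (FactGroup G ?k)"
    proof
      fix y assume "y \<in> h ` carrier G"
      then obtain g where g: "g \<in> carrier G" "y = h g" by auto
      then have "?k #>\<^bsub>G\<^esub> g \<in> carrier (FactGroup G ?k)"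
        by (auto simp: FactGroup_def RCOSETS_def)
      moreover have "the_elem (h ` (?k #>\<^bsub>G\<^esub> g)) = y"
        using hom_img_coset[OF assms(1) g(1)] g by simp
      ultimately show "y \<in> (\<lambda>C. the_elem (h ` C)) ` carrier (FactGroup G ?k)" by force
    qed
  qed
  have "card (carrier (FactGroup G ?k)) = card (h ` carrier G)"
    using card_image[OF inj] img by simp
  moreover have "card (rcosets\<^bsub>G\<^esub> ?k) * card ?k = order G"
    by (rule G.lagrange[OF subgroup_kernel])
  ultimately have "card (h ` carrier G) * card ?k = card (carrier G)"
    by (simp add: FactGroup_def order_def)
  then show ?thesis by (metis mult.commute)
qed
lemma ppow_Int:
  assumes grp: "group G" and fin: "finite (carrier G)" and p: "Factorial_Ring.prime (p::nat)"
    and M: "M \<lhd> G" and N: "N \<lhd> G"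
    and a: "card (carrier G) = card M * p ^ a" and b: "card (carrier G) = card N * p ^ b"
  shows "\<exists>c. card (carrier G) = card (M \<inter> N) * p ^ c"
proof -
  interpret G: group G by fact
  interpret NN: normal N G by fact
  have Msub: "subgroup M G" using M by (simp add: normal_def)
  have MG: "group (G\<lparr>carrier := M\<rparr>)" using G.subgroup_imp_group[OF Msub] .
  have QG: "group (G Mod N)" by (rule NN.factorgroup_is_group)
  let ?h = "\<lambda>x. N #>\<^bsub>G\<^esub> x"
  have hG: "?h \<in> hom G (G Mod N)" by (rule NN.r_coset_hom_Mod)
  have Msubc: "M \<subseteq> carrier G" using Msub subgroup.subset by blast
  have hM: "?h \<in> hom (G\<lparr>carrier := M\<rparr>) (G Mod N)"
  proof -
    have "\<forall>x\<in>M. \<forall>y\<in>M. ?h (x \<otimes>\<^bsub>G\<^esub> y) = ?h x \<otimes>\<^bsub>G Mod N\<^esub> ?h y"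
      using hG Msubc unfolding hom_def by blast
    moreover have "\<forall>x\<in>M. ?h x \<in> carrier (G Mod N)"
      using hG Msubc unfolding hom_def by blast
    ultimately show ?thesis unfolding hom_def by simp
  qed
  interpret gh: group_hom "G\<lparr>carrier := M\<rparr>" "G Mod N" ?h
    using MG QG hM by (simp add: group_hom_def group_hom_axioms_def)
  have ker: "kernel (G\<lparr>carrier := M\<rparr>) (G Mod N) ?h = M \<inter> N"
  proof -
    have "x \<in> N \<longleftrightarrow> N #>\<^bsub>G\<^esub> x = N" if "x \<in> M" for x
    proof
      assume "x \<in> N" then show "N #>\<^bsub>G\<^esub> x = N"
        using NN.subgroup_axioms G.is_group by (simp add: subgroup.rcos_const)
    next
      assume "N #>\<^bsub>G\<^esub> x = N"
      moreover have "x \<in> N #>\<^bsub>G\<^esub> x" using that Msubc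
        by (simp add: G.rcos_self NN.subgroup_axioms subsetD)
      ultimately show "x \<in> N" by simp
    qed
    then show ?thesis by (auto simp: kernel_def FactGroup_def)
  qed
  have finM: "finite M" using fin Msubc finite_subset by blast
  have c1: "card M = card (M \<inter> N) * card (?h ` M)"
    using card_hom[OF gh.group_hom_axioms] finM ker by simp
  have imgsub: "subgroup (?h ` M) (G Mod N)" using gh.img_is_subgroup by simp
  have l1: "card (rcosets\<^bsub>G Mod N\<^esub> (?h ` M)) * card (?h ` M) = order (G Mod N)"
    using group.lagrange[OF QG imgsub] .
  have l2: "card (rcosets\<^bsub>G\<^esub> N) * card N = order G"
    using G.lagrange[OF NN.subgroup_axioms] .
  have Npos: "card N > 0"
    using b fin p by (metis card_gt_0_iff finite_subset NN.subset G.one_closed NN.one_closed empty_iff)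
  have "card (rcosets\<^bsub>G\<^esub> N) = p ^ b" using l2 b Npos by (simp add: order_def)
  then have "order (G Mod N) = p ^ b" by (simp add: order_def FactGroup_def)
  then have "card (?h ` M) dvd p ^ b" using l1 by (metis dvd_triv_right)
  then obtain c where c: "card (?h ` M) = p ^ c" using divides_primepow_nat[OF p] by blast
  have "card (carrier G) = card (M \<inter> N) * p ^ (c + a)"
    using a c1 c by (simp add: power_add)
  then show ?thesis by blast
qed

lemma Op_props:
  assumes grp: "group G" and fin: "finite (carrier G)" and p: "Factorial_Ring.prime (p::nat)"
  shows "O_p_upper p G \<lhd> G \<and> (\<exists>n. card (carrier G) = card (O_p_upper p G) * p ^ n)"
proof -
  interpret G: group G by fact
  define Fam where "Fam = {N. N \<lhd> G \<and> (\<exists>n. card (carrier G) = card N * p ^ n)}"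
  have FamP: "Fam \<subseteq> Pow (carrier G)"
    unfolding Fam_def using normal_imp_subgroup subgroup.subset by fastforce
  have finF: "finite Fam" using FamP fin by (meson finite_Pow_iff finite_subset)
  have cG: "carrier G \<in> Fam" unfolding Fam_def
    using G.normal_invI G.subgroup_self by (auto intro!: exI[of _ 0] simp: G.inv_closed)
  have IntF: "M \<inter> N \<in> Fam" if "M \<in> Fam" "N \<in> Fam" for M N
    using that ppow_Int[OF grp fin p] G.normal_subgroup_intersect unfolding Fam_def by blast
  have main: "A \<subseteq> Fam \<longrightarrow> \<Inter>A \<in> Fam" if "finite A" "A \<noteq> {}" for A
    using that
  proof (induction A rule: finite_ne_induct)
    case (singleton x) then show ?case by simp
  next
    case (insert x F) then show ?case using IntF by simp
  qed
  have "\<Inter>Fam \<in> Fam" using main[OF finF] cG by blast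
  then show ?thesis unfolding O_p_upper_def Fam_def[symmetric] by (simp add: Fam_def)
qed
lemma fs_basic:
  assumes "fusion_system p T F"
  shows "group T" "finite (carrier T)"
  using assms unfolding fusion_system_def p_group_def by auto

lemma fs_sub:
  assumes "fusion_system p T F" "\<phi> \<in> F P Q"
  shows "subgroup P T" "subgroup Q T"
  using assms unfolding fusion_system_def by blast+

lemma fs_inj:
  assumes "fusion_system p T F" "\<phi> \<in> F P Q"
  shows "\<phi> \<in> P \<rightarrow>\<^sub>E Q" "inj_on \<phi> P"
proof -
  have "\<phi> \<in> Inj_hom T P Q"
    using assms fs_sub[OF assms] unfolding fusion_system_def by blast
  then show "\<phi> \<in> P \<rightarrow>\<^sub>E Q" "inj_on \<phi> P" unfolding Inj_hom_def by auto
qed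

lemma fs_mult:
  assumes "fusion_system p T F" "\<phi> \<in> F P Q" "x \<in> P" "y \<in> P"
  shows "\<phi> (x \<otimes>\<^bsub>T\<^esub> y) = \<phi> x \<otimes>\<^bsub>T\<^esub> \<phi> y"
proof -
  have "\<phi> \<in> Inj_hom T P Q"
    using assms fs_sub[OF assms(1,2)] unfolding fusion_system_def by blast
  then show ?thesis using assms unfolding Inj_hom_def by auto
qed

lemma fs_comp:
  assumes "fusion_system p T F" "\<phi> \<in> F P Q" "\<psi> \<in> F Q R"
  shows "compose P \<psi> \<phi> \<in> F P R"
  using assms unfolding fusion_system_def by blast

lemma fs_img:
  assumes "fusion_system p T F" "\<phi> \<in> F P Q"
  shows "\<phi> \<in> F P (\<phi> ` P)"
  using assms unfolding fusion_system_def by blast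

lemma fs_inv:
  assumes "fusion_system p T F" "\<phi> \<in> F P Q"
  shows "(\<lambda>y\<in>\<phi> ` P. inv_into P \<phi> y) \<in> F (\<phi> ` P) P"
  using assms unfolding fusion_system_def by blast

lemma fs_incl:
  assumes "fusion_system p T F" "subgroup P T" "subgroup Q T" "P \<subseteq> Q"
  shows "(\<lambda>x\<in>P. x) \<in> F P Q"
proof -
  interpret T: group T using fs_basic[OF assms(1)] by simp
  have Ps: "P \<subseteq> carrier T" using assms(2) subgroup.subset by blast
  have "conjmap T \<one>\<^bsub>T\<^esub> P = (\<lambda>x\<in>P. x)"
    unfolding conjmap_def using Ps by (intro restrict_ext) auto
  moreover have "(\<lambda>x\<in>P. x) ` P \<subseteq> Q" using assms(4) by auto
  ultimately have "(\<lambda>x\<in>P. x) \<in> Hom_S T P Q" unfolding Hom_S_def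
    by (metis (mono_tags, lifting) T.one_closed mem_Collect_eq)
  then show ?thesis using assms unfolding fusion_system_def by blast
qed

lemma fs_widen:
  assumes "fusion_system p T F" "\<phi> \<in> F P Q" "subgroup R T" "Q \<subseteq> R"
  shows "\<phi> \<in> F P R"
proof -
  have "(\<lambda>x\<in>Q. x) \<in> F Q R" using fs_incl[OF assms(1) fs_sub(2)[OF assms(1,2)] assms(3,4)] .
  then have "compose P (\<lambda>x\<in>Q. x) \<phi> \<in> F P R" using fs_comp[OF assms(1,2)] by blast
  moreover have "compose P (\<lambda>x\<in>Q. x) \<phi> = \<phi>"
    using fs_inj(1)[OF assms(1,2)] by (intro Id_compose) (auto simp: PiE_def)
  ultimately show ?thesis by simp
qed

lemma fs_restr:
  assumes "fusion_system p T F" "\<phi> \<in> F Q R" "subgroup P T" "P \<subseteq> Q"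
  shows "restrict \<phi> P \<in> F P R"
proof -
  have "(\<lambda>x\<in>P. x) \<in> F P Q" using fs_incl[OF assms(1,3) fs_sub(1)[OF assms(1,2)] assms(4)] .
  then have "compose P \<phi> (\<lambda>x\<in>P. x) \<in> F P R" using fs_comp[OF assms(1) _ assms(2)] by blast
  moreover have "compose P \<phi> (\<lambda>x\<in>P. x) = restrict \<phi> P"
    by (auto simp: compose_def fun_eq_iff)
  ultimately show ?thesis by simp
qed

lemma fs_finite:
  assumes "fusion_system p T F" "subgroup P T"
  shows "finite P"
  using fs_basic(2)[OF assms(1)] assms(2) subgroup.subset finite_subset by blast

lemma fs_card_img:
  assumes "fusion_system p T F" "\<phi> \<in> F P Q"
  shows "card (\<phi> ` P) = card P"
  using fs_inj(2)[OF assms] card_image by blast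

lemma fs_surj:
  assumes "fusion_system p T F" "\<phi> \<in> F P Q" "card Q = card P"
  shows "\<phi> ` P = Q"
proof -
  have "\<phi> ` P \<subseteq> Q" using fs_inj(1)[OF assms(1,2)] by auto
  moreover have "finite Q" using fs_finite[OF assms(1) fs_sub(2)[OF assms(1,2)]] .
  ultimately show ?thesis using fs_card_img[OF assms(1,2)] assms(3) by (metis card_subset_eq)
qed

lemma fs_inv_full:
  assumes "fusion_system p T F" "\<phi> \<in> F P Q" "card Q = card P"
  shows "(\<lambda>y\<in>Q. inv_into P \<phi> y) \<in> F Q P"
  using fs_inv[OF assms(1,2)] fs_surj[OF assms] by simp

lemma aut_group:
  assumes "fusion_system p T F" "subgroup P T"
  shows "group (Aut_grp F P)"
proof (rule groupI)
  show "x \<otimes>\<^bsub>Aut_grp F P\<^esub> y \<in> carrier (Aut_grp F P)"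
    if "x \<in> carrier (Aut_grp F P)" "y \<in> carrier (Aut_grp F P)" for x y
    using that fs_comp[OF assms(1)] by (simp add: Aut_grp_def)
  show "\<one>\<^bsub>Aut_grp F P\<^esub> \<in> carrier (Aut_grp F P)"
    using fs_incl[OF assms assms(2)] by (simp add: Aut_grp_def)
  show "x \<otimes>\<^bsub>Aut_grp F P\<^esub> y \<otimes>\<^bsub>Aut_grp F P\<^esub> z = x \<otimes>\<^bsub>Aut_grp F P\<^esub> (y \<otimes>\<^bsub>Aut_grp F P\<^esub> z)"
    if "x \<in> carrier (Aut_grp F P)" "y \<in> carrier (Aut_grp F P)" "z \<in> carrier (Aut_grp F P)" for x y z
  proof -
    have "z \<in> P \<rightarrow> P" using fs_inj(1)[OF assms(1)] that(3) by (auto simp: Aut_grp_def PiE_def)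
    then show ?thesis by (simp add: Aut_grp_def compose_assoc)
  qed
  show "\<one>\<^bsub>Aut_grp F P\<^esub> \<otimes>\<^bsub>Aut_grp F P\<^esub> x = x" if "x \<in> carrier (Aut_grp F P)" for x
    using fs_inj(1)[OF assms(1)] that by (auto simp: Aut_grp_def PiE_def intro!: Id_compose)
  show "\<exists>y\<in>carrier (Aut_grp F P). y \<otimes>\<^bsub>Aut_grp F P\<^esub> x = \<one>\<^bsub>Aut_grp F P\<^esub>"
    if "x \<in> carrier (Aut_grp F P)" for x
  proof -
    have x: "x \<in> F P P" using that by (simp add: Aut_grp_def)
    have im: "x ` P = P" using fs_surj[OF assms(1) x] by simp
    have "(\<lambda>y\<in>P. inv_into P x y) \<in> F P P" using fs_inv_full[OF assms(1) x] by simp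
    moreover have "compose P (\<lambda>y\<in>P. inv_into P x y) x = (\<lambda>x\<in>P. x)"
      using compose_inv_into_id[of x P P] fs_inj(2)[OF assms(1) x] im by (simp add: bij_betw_def)
    ultimately show ?thesis by (auto simp: Aut_grp_def)
  qed
qed

lemma aut_inv:
  assumes "fusion_system p T F" "subgroup P T" "x \<in> F P P"
  shows "inv\<^bsub>Aut_grp F P\<^esub> x = (\<lambda>y\<in>P. inv_into P x y)"
proof -
  interpret A: group "Aut_grp F P" using aut_group[OF assms(1,2)] .
  have im: "x ` P = P" using fs_surj[OF assms(1,3)] by simp
  have "(\<lambda>y\<in>P. inv_into P x y) \<in> F P P" using fs_inv_full[OF assms(1,3)] by simp
  moreover have "compose P (\<lambda>y\<in>P. inv_into P x y) x = (\<lambda>x\<in>P. x)"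
    using compose_inv_into_id[of x P P] fs_inj(2)[OF assms(1,3)] im by (simp add: bij_betw_def)
  ultimately show ?thesis using assms(3) by (intro A.inv_equality) (auto simp: Aut_grp_def)
qed
lemma sg0:
  assumes "group S" "subgroup S0 S"
  shows "subgroup U (S\<lparr>carrier := S0\<rparr>) \<longleftrightarrow> subgroup U S \<and> U \<subseteq> S0"
proof
  interpret S: group S by fact
  assume H: "subgroup U (S\<lparr>carrier := S0\<rparr>)"
  have XS0: "U \<subseteq> S0" using subgroup.subset[OF H] by simp
  have "subgroup U S"
  proof (rule S.subgroupI)
    show "U \<subseteq> carrier S" using XS0 subgroup.subset[OF assms(2)] by blast
    show "U \<noteq> {}" using subgroup.one_closed[OF H] by auto
    show "inv\<^bsub>S\<^esub> a \<in> U" if "a \<in> U" for a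
      using subgroup.m_inv_closed[OF H that] S.m_inv_consistent[OF assms(2)] that XS0 by auto
    show "a \<otimes>\<^bsub>S\<^esub> b \<in> U" if "a \<in> U" "b \<in> U" for a b
      using subgroup.m_closed[OF H that] by simp
  qed
  then show "subgroup U S \<and> U \<subseteq> S0" using XS0 by simp
next
  interpret S: group S by fact
  assume "subgroup U S \<and> U \<subseteq> S0"
  then show "subgroup U (S\<lparr>carrier := S0\<rparr>)" using S.subgroup_incl assms(2) by blast
qed

context
  fixes p :: nat and S :: "('a, 'b) monoid_scheme"
    and F F0 :: "'a set \<Rightarrow> 'a set \<Rightarrow> ('a \<Rightarrow> 'a) set" and S0 :: "'a set"
  assumes FS: "fusion_system p S F"
    and FS0: "fusion_system p (S\<lparr>carrier := S0\<rparr>) F0"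
    and S0sub: "subgroup S0 S"
    and FF0: "\<And>P Q. F0 P Q \<subseteq> F P Q"
    and INV: "\<forall>P Q \<phi> \<psi>. subgroup P S \<and> subgroup Q S \<and> P \<subseteq> Q \<and> Q \<subseteq> S0 \<and>
        \<phi> \<in> F Q S0 \<and> \<psi> \<in> F0 P Q \<longrightarrow>
        (\<lambda>y\<in>\<phi> ` P. \<phi> (\<psi> (inv_into Q \<phi> y))) \<in> F0 (\<phi> ` P) (\<phi> ` Q)"
    and FR: "\<forall>P \<phi>. subgroup P S \<and> P \<subseteq> S0 \<and> \<phi> \<in> F P S0 \<longrightarrow>
        (\<exists>\<phi>0 \<in> F0 P S0. \<exists>\<alpha> \<in> F S0 S0. \<phi> = compose P \<alpha> \<phi>0)"
begin

lemma grpS: "group S" using fs_basic[OF FS] by simp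

lemma sgS0: "subgroup U (S\<lparr>carrier := S0\<rparr>) \<longleftrightarrow> subgroup U S \<and> U \<subseteq> S0"
  using sg0[OF grpS S0sub] .

lemma F0sub: assumes "\<phi> \<in> F0 U Z" shows "subgroup U S" "U \<subseteq> S0" "subgroup Z S" "Z \<subseteq> S0"
  using fs_sub[OF FS0 assms] sgS0 by auto

lemma S0S0: "subgroup S0 (S\<lparr>carrier := S0\<rparr>)" using sgS0 S0sub by simp

lemma alpha_img:
  assumes "\<alpha> \<in> F S0 S0" "subgroup U S" "U \<subseteq> S0"
  shows "subgroup (\<alpha> ` U) S" "\<alpha> ` U \<subseteq> S0" "card (\<alpha> ` U) = card U"
proof -
  have r: "restrict \<alpha> U \<in> F U S0" using fs_restr[OF FS assms(1,2,3)] .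
  have "restrict \<alpha> U \<in> F U (\<alpha> ` U)" using fs_img[OF FS r] by (simp only: image_restrict_eq)
  then show "subgroup (\<alpha> ` U) S" using fs_sub[OF FS] by blast
  show "\<alpha> ` U \<subseteq> S0" using fs_inj(1)[OF FS assms(1)] assms(3) by auto
  show "card (\<alpha> ` U) = card U"
    using fs_inj(2)[OF FS assms(1)] assms(3) by (meson card_image inj_on_subset)
qed

lemma alpha_surj: assumes "\<alpha> \<in> F S0 S0" shows "\<alpha> ` S0 = S0"
  using fs_surj[OF FS assms] by simp

lemma TR:
  assumes "\<alpha> \<in> F S0 S0" "\<psi> \<in> F0 U Z"
  shows "(\<lambda>y\<in>\<alpha> ` U. \<alpha> (\<psi> (inv_into S0 \<alpha> y))) \<in> F0 (\<alpha> ` U) (\<alpha> ` Z)"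
proof -
  note U = F0sub[OF assms(2)]
  have w: "\<psi> \<in> F0 U S0" using fs_widen[OF FS0 assms(2) S0S0 U(4)] .
  let ?t = "\<lambda>y\<in>\<alpha> ` U. \<alpha> (\<psi> (inv_into S0 \<alpha> y))"
  have "?t \<in> F0 (\<alpha> ` U) (\<alpha> ` S0)"
    using INV U S0sub w assms(1) by blast
  then have t: "?t \<in> F0 (\<alpha> ` U) (?t ` (\<alpha> ` U))" using fs_img[OF FS0] by blast
  have inj: "inj_on \<alpha> S0" using fs_inj(2)[OF FS assms(1)] .
  have "?t ` (\<alpha> ` U) \<subseteq> \<alpha> ` Z"
  proof
    fix z assume "z \<in> ?t ` (\<alpha> ` U)"
    then obtain x where x: "x \<in> U" "z = ?t (\<alpha> x)" by auto
    have "inv_into S0 \<alpha> (\<alpha> x) = x" using inv_into_f_f[OF inj] x U(2) by auto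
    then have "z = \<alpha> (\<psi> x)" using x by simp
    moreover have "\<psi> x \<in> Z" using fs_inj(1)[OF FS0 assms(2)] x(1) by auto
    ultimately show "z \<in> \<alpha> ` Z" by simp
  qed
  moreover have "subgroup (\<alpha> ` Z) (S\<lparr>carrier := S0\<rparr>)"
    using alpha_img[OF assms(1) U(3,4)] sgS0 by simp
  ultimately show ?thesis using fs_widen[OF FS0 t] by blast
qed


lemma th_in: assumes "\<alpha> \<in> Yset F F0 S0 P" shows "thY F0 P \<alpha> \<in> F0 (\<alpha> ` P) P"
proof -
  from assms obtain \<theta> where "\<theta> \<in> F0 (\<alpha> ` P) P" unfolding Yset_def by blast
  then show ?thesis unfolding thY_def by (metis someI_ex)
qed

lemma Y_F: assumes "\<alpha> \<in> Yset F F0 S0 P" shows "\<alpha> \<in> F S0 S0"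
  using assms unfolding Yset_def by auto

lemma f_in:
  assumes "subgroup P S" "P \<subseteq> S0" "\<alpha> \<in> Yset F F0 S0 P"
  shows "fY F0 P \<alpha> \<in> F P P"
proof -
  have a: "\<alpha> \<in> F S0 S0" using Y_F[OF assms(3)] .
  have r: "restrict \<alpha> P \<in> F P S0" using fs_restr[OF FS a assms(1,2)] .
  have "restrict \<alpha> P \<in> F P (\<alpha> ` P)" using fs_img[OF FS r] by (simp only: image_restrict_eq)
  moreover have "thY F0 P \<alpha> \<in> F (\<alpha> ` P) P" using th_in[OF assms(3)] FF0 by blast
  ultimately have "compose P (thY F0 P \<alpha>) (restrict \<alpha> P) \<in> F P P" using fs_comp[OF FS] by blast
  moreover have "compose P (thY F0 P \<alpha>) (restrict \<alpha> P) = fY F0 P \<alpha>"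
    unfolding fY_def by (auto simp: compose_def fun_eq_iff)
  ultimately show ?thesis by simp
qed

lemma f_in0:
  assumes "subgroup P S" "P \<subseteq> S0" "\<alpha> \<in> F0 S0 S0"
  shows "\<alpha> \<in> Yset F F0 S0 P" "fY F0 P \<alpha> \<in> F0 P P"
proof -
  have P0: "subgroup P (S\<lparr>carrier := S0\<rparr>)" using sgS0 assms by simp
  have r: "restrict \<alpha> P \<in> F0 P S0" using fs_restr[OF FS0 assms(3) P0 assms(2)] .
  have r2: "restrict \<alpha> P \<in> F0 P (\<alpha> ` P)" using fs_img[OF FS0 r] by (simp only: image_restrict_eq)
  have "(\<lambda>y\<in>\<alpha> ` P. inv_into P (restrict \<alpha> P) y) \<in> F0 (\<alpha> ` P) P"
    using fs_inv[OF FS0 r2] by (simp only: image_restrict_eq)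
  then show Y: "\<alpha> \<in> Yset F F0 S0 P" using FF0 assms(3) unfolding Yset_def by blast
  have "compose P (thY F0 P \<alpha>) (restrict \<alpha> P) \<in> F0 P P" using fs_comp[OF FS0 r2 th_in[OF Y]] .
  moreover have "compose P (thY F0 P \<alpha>) (restrict \<alpha> P) = fY F0 P \<alpha>"
    unfolding fY_def by (auto simp: compose_def fun_eq_iff)
  ultimately show "fY F0 P \<alpha> \<in> F0 P P" by simp
qed

lemma Y_mult:
  assumes P: "subgroup P S" "P \<subseteq> S0" and Ya: "\<alpha> \<in> Yset F F0 S0 P" and Yb: "\<beta> \<in> Yset F F0 S0 P"
  shows "compose S0 \<alpha> \<beta> \<in> Yset F F0 S0 P \<and>
    (\<exists>h\<in>F0 P P. compose P (fY F0 P \<alpha>) (fY F0 P \<beta>) = compose P h (fY F0 P (compose S0 \<alpha> \<beta>)))"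
proof -
  let ?g = "compose S0 \<alpha> \<beta>"
  have a: "\<alpha> \<in> F S0 S0" and b: "\<beta> \<in> F S0 S0" using Y_F Ya Yb by auto
  have g: "?g \<in> F S0 S0" using fs_comp[OF FS b a] .
  have gP: "?g ` P = \<alpha> ` \<beta> ` P" using P(2) by (auto simp: compose_def image_iff)
  have bP: "subgroup (\<beta> ` P) S" "\<beta> ` P \<subseteq> S0" "card (\<beta> ` P) = card P" using alpha_img[OF b P] by auto
  let ?psi = "\<lambda>y\<in>\<alpha> ` (\<beta> ` P). \<alpha> (thY F0 P \<beta> (inv_into S0 \<alpha> y))"
  have psi: "?psi \<in> F0 (\<alpha> ` \<beta> ` P) (\<alpha> ` P)" using TR[OF a th_in[OF Yb]] .
  let ?k = "compose (\<alpha> ` \<beta> ` P) (thY F0 P \<alpha>) ?psi"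
  have k: "?k \<in> F0 (\<alpha> ` \<beta> ` P) P" using fs_comp[OF FS0 psi th_in[OF Ya]] .
  have Yg: "?g \<in> Yset F F0 S0 P" unfolding Yset_def using g k gP by auto
  have thg: "thY F0 P ?g \<in> F0 (\<alpha> ` \<beta> ` P) P" using th_in[OF Yg] gP by simp
  have cg: "card (\<alpha> ` \<beta> ` P) = card P" using alpha_img[OF a bP(1,2)] bP(3) by simp
  let ?ti = "\<lambda>y\<in>P. inv_into (\<alpha> ` \<beta> ` P) (thY F0 P ?g) y"
  have ti: "?ti \<in> F0 P (\<alpha> ` \<beta> ` P)" using fs_inv_full[OF FS0 thg] cg by simp
  let ?h = "compose P ?k ?ti"
  have h: "?h \<in> F0 P P" using fs_comp[OF FS0 ti k] .
  have injA: "inj_on \<alpha> S0" using fs_inj(2)[OF FS a] .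
  have injT: "inj_on (thY F0 P ?g) (\<alpha> ` \<beta> ` P)" using fs_inj(2)[OF FS0 thg] .
  have thgP: "thY F0 P ?g \<in> (\<alpha> ` \<beta> ` P) \<rightarrow>\<^sub>E P" using fs_inj(1)[OF FS0 thg] .
  have thbP: "thY F0 P \<beta> \<in> (\<beta> ` P) \<rightarrow>\<^sub>E P" using fs_inj(1)[OF FS0 th_in[OF Yb]] .
  have eq: "compose P (fY F0 P \<alpha>) (fY F0 P \<beta>) = compose P ?h (fY F0 P ?g)"
  proof (rule ext)
    fix x show "compose P (fY F0 P \<alpha>) (fY F0 P \<beta>) x = compose P ?h (fY F0 P ?g) x"
    proof (cases "x \<in> P")
      case False then show ?thesis by (simp add: compose_def)
    next
      case True
      have xS0: "x \<in> S0" using True P(2) by auto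
      have bx: "\<beta> x \<in> \<beta> ` P" using True by simp
      have bxS0: "\<beta> x \<in> S0" using bP(2) bx by auto
      have tb: "thY F0 P \<beta> (\<beta> x) \<in> P" using thbP bx by auto
      have gx: "?g x = \<alpha> (\<beta> x)" using xS0 by (simp add: compose_def)
      have abx: "\<alpha> (\<beta> x) \<in> \<alpha> ` \<beta> ` P" using True by simp
      have tgx: "thY F0 P ?g (\<alpha> (\<beta> x)) \<in> P" using thgP abx by auto
      have L: "compose P (fY F0 P \<alpha>) (fY F0 P \<beta>) x = thY F0 P \<alpha> (\<alpha> (thY F0 P \<beta> (\<beta> x)))"
        using True tb by (simp add: fY_def compose_def)
      have "?ti (thY F0 P ?g (\<alpha> (\<beta> x))) = \<alpha> (\<beta> x)"
        using tgx inv_into_f_f[OF injT abx] by simp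
      moreover have "inv_into S0 \<alpha> (\<alpha> (\<beta> x)) = \<beta> x" using inv_into_f_f[OF injA bxS0] .
      ultimately have "compose P ?h (fY F0 P ?g) x = thY F0 P \<alpha> (\<alpha> (thY F0 P \<beta> (\<beta> x)))"
        using True gx tgx abx by (simp add: fY_def compose_def)
      then show ?thesis using L by simp
    qed
  qed
  show ?thesis using Yg h eq by blast
qed

lemma Y_inv:
  assumes P: "subgroup P S" "P \<subseteq> S0" and Ya: "\<alpha> \<in> Yset F F0 S0 P"
  shows "(\<lambda>y\<in>S0. inv_into S0 \<alpha> y) \<in> Yset F F0 S0 P"
proof -
  have a: "\<alpha> \<in> F S0 S0" using Y_F Ya by auto
  let ?b = "\<lambda>y\<in>S0. inv_into S0 \<alpha> y"
  have b: "?b \<in> F S0 S0" using fs_inv_full[OF FS a] by simp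
  have th: "thY F0 P \<alpha> \<in> F0 (\<alpha> ` P) P" using th_in[OF Ya] .
  have c: "card P = card (\<alpha> ` P)" using alpha_img[OF a P] by simp
  have thi: "(\<lambda>y\<in>P. inv_into (\<alpha> ` P) (thY F0 P \<alpha>) y) \<in> F0 P (\<alpha> ` P)"
    using fs_inv_full[OF FS0 th] c by simp
  have injA: "inj_on \<alpha> S0" using fs_inj(2)[OF FS a] .
  have "?b ` (\<alpha> ` P) = P"
  proof -
    have "\<alpha> ` P \<subseteq> S0" using alpha_img[OF a P] by simp
    then have "?b ` (\<alpha> ` P) = inv_into S0 \<alpha> ` \<alpha> ` P" by (auto simp: image_iff)
    also have "\<dots> = P" using injA P(2) by (metis image_inv_into_cancel subset_image_iff inv_into_image_cancel)
    finally show ?thesis .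
  qed
  then have "F0 (?b ` P) P \<noteq> {}" using TR[OF b thi] by auto
  then show ?thesis using b unfolding Yset_def by blast
qed

lemma Y_surj:
  assumes P: "subgroup P S" "P \<subseteq> S0" and chi: "\<chi> \<in> F P P"
  shows "\<exists>\<beta>\<in>Yset F F0 S0 P. \<exists>h\<in>F0 P P. (\<lambda>y\<in>P. inv_into P \<chi> y) = compose P h (fY F0 P \<beta>)"
proof -
  have chi0: "\<chi> \<in> F P S0" using fs_widen[OF FS chi S0sub P(2)] .
  obtain \<phi>0 \<alpha> where p0: "\<phi>0 \<in> F0 P S0" and a: "\<alpha> \<in> F S0 S0" and ch: "\<chi> = compose P \<alpha> \<phi>0"
    using FR P chi0 by blast
  let ?b = "\<lambda>y\<in>S0. inv_into S0 \<alpha> y"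
  have b: "?b \<in> F S0 S0" using fs_inv_full[OF FS a] by simp
  have injA: "inj_on \<alpha> S0" using fs_inj(2)[OF FS a] .
  have imA: "\<alpha> ` S0 = S0" using alpha_surj[OF a] .
  have p0P: "\<phi>0 ` P \<subseteq> S0" using fs_inj(1)[OF FS0 p0] by auto
  have chiP: "\<chi> ` P = P" using fs_surj[OF FS chi] by simp
  have aP: "\<alpha> ` \<phi>0 ` P = P" using chiP ch by (auto simp: compose_def image_iff)
  have bP: "?b ` P = \<phi>0 ` P"
  proof -
    have "?b ` P = inv_into S0 \<alpha> ` P" using P(2) by (auto simp: image_iff)
    also have "\<dots> = inv_into S0 \<alpha> ` \<alpha> ` \<phi>0 ` P" using aP by simp
    also have "\<dots> = \<phi>0 ` P" using injA p0P by (metis inv_into_image_cancel)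
    finally show ?thesis .
  qed
  have p0i: "\<phi>0 \<in> F0 P (\<phi>0 ` P)" using fs_img[OF FS0 p0] .
  have p0inv: "(\<lambda>y\<in>\<phi>0 ` P. inv_into P \<phi>0 y) \<in> F0 (\<phi>0 ` P) P" using fs_inv[OF FS0 p0] .
  have Yb: "?b \<in> Yset F F0 S0 P" unfolding Yset_def using b p0inv bP by auto
  have th: "thY F0 P ?b \<in> F0 (\<phi>0 ` P) P" using th_in[OF Yb] bP by simp
  have c: "card P = card (\<phi>0 ` P)" using fs_card_img[OF FS0 p0] by simp
  let ?ti = "\<lambda>y\<in>P. inv_into (\<phi>0 ` P) (thY F0 P ?b) y"
  have ti: "?ti \<in> F0 P (\<phi>0 ` P)" using fs_inv_full[OF FS0 th] c by simp
  let ?h = "compose P (\<lambda>y\<in>\<phi>0 ` P. inv_into P \<phi>0 y) ?ti"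
  have h: "?h \<in> F0 P P" using fs_comp[OF FS0 ti p0inv] .
  have injT: "inj_on (thY F0 P ?b) (\<phi>0 ` P)" using fs_inj(2)[OF FS0 th] .
  have thP: "thY F0 P ?b \<in> (\<phi>0 ` P) \<rightarrow>\<^sub>E P" using fs_inj(1)[OF FS0 th] .
  have injC: "inj_on \<chi> P" using fs_inj(2)[OF FS chi] .
  have injP0: "inj_on \<phi>0 P" using fs_inj(2)[OF FS0 p0] .
  have eq: "(\<lambda>y\<in>P. inv_into P \<chi> y) = compose P ?h (fY F0 P ?b)"
  proof (rule ext)
    fix x show "(\<lambda>y\<in>P. inv_into P \<chi> y) x = compose P ?h (fY F0 P ?b) x"
    proof (cases "x \<in> P")
      case False then show ?thesis by (simp add: compose_def)
    next
      case True
      have xS0: "x \<in> S0" using True P(2) by auto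
      have bx: "?b x \<in> \<phi>0 ` P" using True bP by blast
      have tbx: "thY F0 P ?b (?b x) \<in> P" using thP bx by auto
      have r1: "compose P ?h (fY F0 P ?b) x = inv_into P \<phi>0 (?b x)"
        using True tbx bx inv_into_f_f[OF injT bx] by (simp add: fY_def compose_def)
      define y where "y = inv_into P \<phi>0 (?b x)"
      have yP: "y \<in> P" unfolding y_def using bx by (simp add: inv_into_into)
      have py: "\<phi>0 y = ?b x" unfolding y_def using bx by (simp add: f_inv_into_f)
      have "\<alpha> (?b x) = x" using xS0 imA by (simp add: f_inv_into_f)
      then have "\<chi> y = x" using yP py ch by (simp add: compose_def)
      then have "inv_into P \<chi> x = y" using inv_into_f_f[OF injC yP] by simp
      then show ?thesis using r1 True y_def by simp
    qed
  qed
  show ?thesis using Yb h eq by blast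
qed
lemma H_normal:
  assumes P: "subgroup P S" "P \<subseteq> S0"
  shows "F0 P P \<lhd> Aut_grp F P"
proof -
  interpret G: group "Aut_grp F P" using aut_group[OF FS P(1)] .
  have P0: "subgroup P (S\<lparr>carrier := S0\<rparr>)" using sgS0 P by simp
  have sub: "subgroup (F0 P P) (Aut_grp F P)"
  proof (rule G.subgroupI)
    show "F0 P P \<subseteq> carrier (Aut_grp F P)" using FF0 by (simp add: Aut_grp_def)
    show "F0 P P \<noteq> {}" using fs_incl[OF FS0 P0 P0] by auto
    show "inv\<^bsub>Aut_grp F P\<^esub> a \<in> F0 P P" if "a \<in> F0 P P" for a
    proof -
      have "a \<in> F P P" using FF0 that by blast
      then show ?thesis using aut_inv[OF FS P(1)] fs_inv_full[OF FS0 that] by simp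
    qed
    show "a \<otimes>\<^bsub>Aut_grp F P\<^esub> b \<in> F0 P P" if "a \<in> F0 P P" "b \<in> F0 P P" for a b
      using fs_comp[OF FS0 that(2,1)] by (simp add: Aut_grp_def)
  qed
  show ?thesis
  proof (rule iffD2[OF G.normal_inv_iff], intro conjI ballI)
    show "subgroup (F0 P P) (Aut_grp F P)" by (fact sub)
    fix x h assume x: "x \<in> carrier (Aut_grp F P)" and h: "h \<in> F0 P P"
    have xF: "x \<in> F P P" using x by (simp add: Aut_grp_def)
    have xS0: "x \<in> F P S0" using fs_widen[OF FS xF S0sub P(2)] .
    have im: "x ` P = P" using fs_surj[OF FS xF] by simp
    have "(\<lambda>y\<in>x ` P. x (h (inv_into P x y))) \<in> F0 (x ` P) (x ` P)"
      using INV P xS0 h by blast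
    then have t: "(\<lambda>y\<in>P. x (h (inv_into P x y))) \<in> F0 P P" using im by simp
    have "x \<otimes>\<^bsub>Aut_grp F P\<^esub> h \<otimes>\<^bsub>Aut_grp F P\<^esub> inv\<^bsub>Aut_grp F P\<^esub> x = (\<lambda>y\<in>P. x (h (inv_into P x y)))"
      using aut_inv[OF FS P(1) xF] im
      by (auto simp: Aut_grp_def compose_def fun_eq_iff inv_into_into)
    then show "x \<otimes>\<^bsub>Aut_grp F P\<^esub> h \<otimes>\<^bsub>Aut_grp F P\<^esub> inv\<^bsub>Aut_grp F P\<^esub> x \<in> F0 P P" using t by simp
  qed
qed
lemma finite_aut:
  assumes "subgroup P S"
  shows "finite (F P P)"
proof -
  have "F P P \<subseteq> P \<rightarrow>\<^sub>E P" using fs_inj(1)[OF FS] by blast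
  moreover have "finite (P \<rightarrow>\<^sub>E P)" using fs_finite[OF FS assms] by (simp add: finite_PiE)
  ultimately show ?thesis using finite_subset by blast
qed

lemma main_P:
  assumes P: "subgroup P S" "P \<subseteq> S0" and p: "Factorial_Ring.prime p"
    and Hyp: "O_p_upper p (Aut_grp F S0) \<subseteq> F0 S0 S0"
  shows "\<exists>n. card (F P P) = card (F0 P P) * p ^ n"
proof -
  let ?G = "Aut_grp F P"
  let ?A = "Aut_grp F S0"
  let ?H = "F0 P P"
  let ?Y = "Yset F F0 S0 P"
  let ?O = "O_p_upper p ?A"
  interpret G: group ?G using aut_group[OF FS P(1)] .
  interpret A: group ?A using aut_group[OF FS S0sub] .
  have Hn: "?H \<lhd> ?G" using H_normal[OF P] .
  interpret HN: normal ?H ?G by (fact Hn)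
  have cA: "carrier ?A = F S0 S0" by (simp add: Aut_grp_def)
  have cG: "carrier ?G = F P P" by (simp add: Aut_grp_def)
  have finA: "finite (carrier ?A)" using finite_aut[OF S0sub] cA by simp
  obtain n where On: "?O \<lhd> ?A" "card (carrier ?A) = card ?O * p ^ n"
    using Op_props[OF A.is_group finA p] by blast
  have S00: "(\<lambda>x\<in>S0. x) \<in> F0 S0 S0" using fs_incl[OF FS0 S0S0 S0S0 order_refl] .
  have Ysub: "subgroup ?Y ?A"
  proof (rule A.subgroupI)
    show "?Y \<subseteq> carrier ?A" using Y_F cA by blast
    show "?Y \<noteq> {}" using f_in0(1)[OF P S00] by blast
    show "inv\<^bsub>?A\<^esub> a \<in> ?Y" if "a \<in> ?Y" for a
      using aut_inv[OF FS S0sub Y_F[OF that]] Y_inv[OF P that] by simp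
    show "a \<otimes>\<^bsub>?A\<^esub> b \<in> ?Y" if "a \<in> ?Y" "b \<in> ?Y" for a b
      using Y_mult[OF P that] by (simp add: Aut_grp_def)
  qed
  let ?Yg = "?A\<lparr>carrier := ?Y\<rparr>"
  have YG: "group ?Yg" using A.subgroup_imp_group[OF Ysub] .
  let ?Phi = "\<lambda>\<alpha>. ?H #>\<^bsub>?G\<^esub> fY F0 P \<alpha>"
  have fc: "fY F0 P \<alpha> \<in> carrier ?G" if "\<alpha> \<in> ?Y" for \<alpha> using f_in[OF P that] cG by simp
  have hom: "?Phi \<in> hom ?Yg (?G Mod ?H)"
    unfolding hom_def
  proof (intro CollectI conjI ballI)
    show "?Phi \<in> carrier ?Yg \<rightarrow> carrier (?G Mod ?H)"
      using fc by (auto simp: FactGroup_def RCOSETS_def)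
    fix a b assume a: "a \<in> carrier ?Yg" and b: "b \<in> carrier ?Yg"
    have aY: "a \<in> ?Y" and bY: "b \<in> ?Y" using a b by auto
    obtain h where h: "h \<in> ?H" and eq: "compose P (fY F0 P a) (fY F0 P b) = compose P h (fY F0 P (compose S0 a b))"
      using Y_mult[OF P aY bY] by blast
    have gY: "compose S0 a b \<in> ?Y" using Y_mult[OF P aY bY] by blast
    have "fY F0 P a \<otimes>\<^bsub>?G\<^esub> fY F0 P b = h \<otimes>\<^bsub>?G\<^esub> fY F0 P (compose S0 a b)"
      using eq by (simp add: Aut_grp_def)
    then have "fY F0 P a \<otimes>\<^bsub>?G\<^esub> fY F0 P b \<in> ?H #>\<^bsub>?G\<^esub> fY F0 P (compose S0 a b)"
      using h unfolding r_coset_def by blast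
    then have "?H #>\<^bsub>?G\<^esub> fY F0 P (compose S0 a b) = ?H #>\<^bsub>?G\<^esub> (fY F0 P a \<otimes>\<^bsub>?G\<^esub> fY F0 P b)"
      using G.repr_independence[OF _ fc[OF gY] HN.subgroup_axioms] by blast
    also have "\<dots> = ?Phi a \<otimes>\<^bsub>?G Mod ?H\<^esub> ?Phi b"
      using HN.rcos_sum[OF fc[OF aY] fc[OF bY]] by (simp add: FactGroup_def)
    finally show "?Phi (a \<otimes>\<^bsub>?Yg\<^esub> b) = ?Phi a \<otimes>\<^bsub>?G Mod ?H\<^esub> ?Phi b"
      by (simp add: Aut_grp_def)
  qed
  have QG: "group (?G Mod ?H)" by (rule HN.factorgroup_is_group)
  interpret PH: group_hom ?Yg "?G Mod ?H" ?Phi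
    using YG QG hom by (simp add: group_hom_def group_hom_axioms_def)
  interpret CH: group_hom ?G "?G Mod ?H" "\<lambda>a. ?H #>\<^bsub>?G\<^esub> a"
    using G.is_group QG HN.r_coset_hom_Mod by (simp add: group_hom_def group_hom_axioms_def)
  let ?K = "kernel ?Yg (?G Mod ?H) ?Phi"
  have OK: "?O \<subseteq> ?K"
  proof
    fix a assume "a \<in> ?O"
    then have a0: "a \<in> F0 S0 S0" using Hyp by blast
    have aY: "a \<in> ?Y" and fa: "fY F0 P a \<in> ?H" using f_in0[OF P a0] by auto
    have "?Phi a = ?H" using subgroup.rcos_const[OF HN.subgroup_axioms G.is_group fa] .
    then show "a \<in> ?K" using aY by (simp add: kernel_def FactGroup_def)
  qed
  have img: "?Phi ` ?Y = carrier (?G Mod ?H)"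
  proof
    show "?Phi ` ?Y \<subseteq> carrier (?G Mod ?H)" using PH.hom_closed by auto
    show "carrier (?G Mod ?H) \<subseteq> ?Phi ` ?Y"
    proof
      fix C assume "C \<in> carrier (?G Mod ?H)"
      then obtain \<chi> where chi: "\<chi> \<in> carrier ?G" and C: "C = ?H #>\<^bsub>?G\<^esub> \<chi>"
        by (auto simp: FactGroup_def RCOSETS_def)
      have chiF: "\<chi> \<in> F P P" using chi cG by simp
      obtain \<beta> h where bY: "\<beta> \<in> ?Y" and h: "h \<in> ?H"
        and eq: "(\<lambda>y\<in>P. inv_into P \<chi> y) = compose P h (fY F0 P \<beta>)"
        using Y_surj[OF P chiF] by blast
      have "inv\<^bsub>?G\<^esub> \<chi> = h \<otimes>\<^bsub>?G\<^esub> fY F0 P \<beta>"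
        using aut_inv[OF FS P(1) chiF] eq by (simp add: Aut_grp_def)
      then have "inv\<^bsub>?G\<^esub> \<chi> \<in> ?H #>\<^bsub>?G\<^esub> fY F0 P \<beta>" using h unfolding r_coset_def by blast
      then have e1: "?Phi \<beta> = ?H #>\<^bsub>?G\<^esub> inv\<^bsub>?G\<^esub> \<chi>"
        using G.repr_independence[OF _ fc[OF bY] HN.subgroup_axioms] by blast
      have bYg: "\<beta> \<in> carrier ?Yg" using bY by simp
      have ib: "inv\<^bsub>?Yg\<^esub> \<beta> \<in> ?Y" using group.inv_closed[OF YG bYg] by simp
      have "?Phi (inv\<^bsub>?Yg\<^esub> \<beta>) = inv\<^bsub>?G Mod ?H\<^esub> (?Phi \<beta>)" using PH.hom_inv[OF bYg] .
      also have "\<dots> = inv\<^bsub>?G Mod ?H\<^esub> (inv\<^bsub>?G Mod ?H\<^esub> (?H #>\<^bsub>?G\<^esub> \<chi>))"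
        using e1 CH.hom_inv[OF chi] by simp
      also have "\<dots> = C" using C group.inv_inv[OF QG] CH.hom_closed[OF chi] by simp
      finally show "C \<in> ?Phi ` ?Y" using ib by force
    qed
  qed
  have finY: "finite ?Y" using finA Ysub subgroup.subset finite_subset by blast
  have c1: "card ?Y = card ?K * card (?Phi ` ?Y)"
    using card_hom[OF PH.group_hom_axioms] finY by simp
  have c2: "card (rcosets\<^bsub>?G\<^esub> ?H) * card ?H = card (F P P)"
    using G.lagrange[OF HN.subgroup_axioms] cG by (simp add: order_def)
  have c2': "card (?Phi ` ?Y) = card (rcosets\<^bsub>?G\<^esub> ?H)" using img by (simp add: FactGroup_def)
  obtain r where c3: "card (F S0 S0) = r * card ?Y"
    using A.lagrange[OF Ysub] cA by (metis order_def)
  have Ksub: "subgroup ?K ?Yg" using PH.subgroup_kernel .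
  have Osub: "subgroup ?O ?A" using On(1) normal_imp_subgroup by blast
  have KY: "?K \<subseteq> ?Y" using subgroup.subset[OF Ksub] by simp
  have OY: "subgroup ?O ?Yg" using A.subgroup_incl[OF Osub Ysub] OK KY by blast
  have OKg: "subgroup ?O (?Yg\<lparr>carrier := ?K\<rparr>)" using group.subgroup_incl[OF YG OY Ksub OK] .
  have KG: "group (?Yg\<lparr>carrier := ?K\<rparr>)" using group.subgroup_imp_group[OF YG Ksub] .
  have l4: "card (rcosets\<^bsub>?Yg\<lparr>carrier := ?K\<rparr>\<^esub> ?O) * card ?O = order (?Yg\<lparr>carrier := ?K\<rparr>)"
    using group.lagrange[OF KG OKg] .
  have "order (?Yg\<lparr>carrier := ?K\<rparr>) = card ?K" by (simp add: order_def)
  then obtain m where c4: "card ?K = m * card ?O" using l4 by metis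
  have Opos: "card ?O > 0"
  proof -
    have "?O \<subseteq> carrier ?A" using Osub subgroup.subset by blast
    then have "finite ?O" using finA finite_subset by blast
    moreover have "?O \<noteq> {}" using subgroup.one_closed[OF Osub] by blast
    ultimately show ?thesis by (simp add: card_gt_0_iff)
  qed
  have e: "card (carrier ?A) = card ?O * (r * m * card (?Phi ` ?Y))"
    using cA c3 c1 c4 by (simp add: ac_simps)
  have "card ?O * p ^ n = card ?O * (r * m * card (?Phi ` ?Y))"
    using On(2) e by (simp only:)
  then have "p ^ n = r * m * card (?Phi ` ?Y)" using Opos by simp
  then have "card (?Phi ` ?Y) dvd p ^ n" by simp
  then obtain c where "card (?Phi ` ?Y) = p ^ c" using divides_primepow_nat[OF p] by blast
  then have "card (F P P) = card ?H * p ^ c" using c2 c2' by (simp add: mult.commute)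
  then show ?thesis by blast
qed

lemma main_sub:
  assumes P: "subgroup P S" "P \<subseteq> S0" and p: "Factorial_Ring.prime p"
    and Hyp: "O_p_upper p (Aut_grp F S0) \<subseteq> F0 S0 S0"
  shows "O_p_upper p (Aut_grp F P) \<subseteq> F0 P P"
proof -
  have "F0 P P \<in> {N. N \<lhd> Aut_grp F P \<and> (\<exists>n. card (carrier (Aut_grp F P)) = card N * p ^ n)}"
    using H_normal[OF P] main_P[OF P p Hyp] by (simp add: Aut_grp_def)
  then show ?thesis unfolding O_p_upper_def by blast
qed
end
theorem lemma4p1:
  fixes p :: nat and S :: "('a, 'b) monoid_scheme"
    and F F0 :: "'a set \<Rightarrow> 'a set \<Rightarrow> ('a \<Rightarrow> 'a) set" and S0 :: "'a set"
  assumes "saturated_fusion_system p S F"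
    and "weakly_normal p S F S0 F0"
    and "O_p_upper p (Aut_grp F S0) \<subseteq> F0 S0 S0"
  shows "(\<forall>P. subgroup P S \<and> P \<subseteq> S0 \<longrightarrow> O_p_upper p (Aut_grp F P) \<subseteq> F0 P P) \<and>
         (hyp p S F \<subseteq> S0 \<longrightarrow> p_power_index p S F S0 F0)"
proof -
  have FS: "fusion_system p S F" using assms(1) unfolding saturated_fusion_system_def by blast
  have pr: "Factorial_Ring.prime p" using FS unfolding fusion_system_def p_group_def by blast
  have FS0: "fusion_system p (S\<lparr>carrier := S0\<rparr>) F0"
    using assms(2) unfolding weakly_normal_def saturated_fusion_system_def by blast
  have S0sub: "subgroup S0 S" and FF0: "\<And>P Q. F0 P Q \<subseteq> F P Q"
    using assms(2) unfolding weakly_normal_def subsystem_def by blast+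
  have INV: "\<forall>P Q \<phi> \<psi>. subgroup P S \<and> subgroup Q S \<and> P \<subseteq> Q \<and> Q \<subseteq> S0 \<and>
        \<phi> \<in> F Q S0 \<and> \<psi> \<in> F0 P Q \<longrightarrow>
        (\<lambda>y\<in>\<phi> ` P. \<phi> (\<psi> (inv_into Q \<phi> y))) \<in> F0 (\<phi> ` P) (\<phi> ` Q)"
    using assms(2) unfolding weakly_normal_def by blast
  have FR: "\<forall>P \<phi>. subgroup P S \<and> P \<subseteq> S0 \<and> \<phi> \<in> F P S0 \<longrightarrow>
        (\<exists>\<phi>0 \<in> F0 P S0. \<exists>\<alpha> \<in> F S0 S0. \<phi> = compose P \<alpha> \<phi>0)"
    using assms(2) unfolding weakly_normal_def by blast
  have A: "\<forall>P. subgroup P S \<and> P \<subseteq> S0 \<longrightarrow> O_p_upper p (Aut_grp F P) \<subseteq> F0 P P"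
    using main_sub[OF FS FS0 S0sub FF0 INV FR _ _ pr assms(3)] by blast
  then show ?thesis unfolding p_power_index_def by blast
qed

end
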